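(* Let $d:\mathbb{R}\to\mathbb{R}$ be a derivation and $\alpha>0$. Then the function $F_{d,\alpha}:\mathbb{R}_+\to\mathbb{R}_+$ defined by \[ F_{d,\alpha}(x)=x^\alpha\exp\Big(\frac{d(x)}{x}\Big)\qquad(x\in\mathbb{R}_+) \] is multiplicative and $(p,\alpha^{-1}p)$-Jensen convex for every positive rational $p$, i.e. \[ F_{d,\alpha}\big(H_p(x,y)\big)\le H_{p/\alpha}\big(F_{d,\alpha}(x),F_{d,\alpha}(y)\big)\qquad(x,y>0,\ p\in\mathbb{Q},\ p>0). \] Hence, if $d$ is a nonzero derivation, then $F_{d,\alpha}$ is a discontinuous function on $\mathbb{R}_+$ which is $(p,\alpha^{-1}p)$-Jensen convex for all positive rationals $p$.
   Context: $\mathbb{R}_+=]0,\infty[$. For $p\in\mathbb{R}$, $H_p(x,y)=\left(\frac{x^p+y^p}{2}\right)^{1/p}$ if $p\neq0$ and $H_0(x,y)=\sqrt{xy}$ ($x,y>0$). A derivation is a function $d:\mathbb{R}\to\mathbb{R}$ that is additive ($d(x+y)=d(x)+d(y)$) and satisfies $d(xy)=xd(y)+yd(x)$ for all $x,y\in\mathbb{R}$. A function $m:\mathbb{R}_+\to\mathbb{R}_+$ is multiplicative if $m(xy)=m(x)m(y)$ for all $x,y>0$. *)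

theory Defs
  imports "HOL-Analysis.Analysis"
begin

definition derivation :: "(real \<Rightarrow> real) \<Rightarrow> bool" where
  "derivation d \<longleftrightarrow> (\<forall>x y. d (x + y) = d x + d y) \<and> (\<forall>x y. d (x * y) = x * d y + y * d x)"

definition H :: "real \<Rightarrow> real \<Rightarrow> real \<Rightarrow> real" where
  "H p x y = (if p = 0 then sqrt (x * y) else ((x powr p + y powr p) / 2) powr (1 / p))"

definition multiplicative_pos :: "(real \<Rightarrow> real) \<Rightarrow> bool" where
  "multiplicative_pos m \<longleftrightarrow> (\<forall>x>0. m x > 0) \<and> (\<forall>x>0. \<forall>y>0. m (x * y) = m x * m y)"

definition F :: "(real \<Rightarrow> real) \<Rightarrow> real \<Rightarrow> real \<Rightarrow> real" where
  "F d \<alpha> x = x powr \<alpha> * exp (d x / x)"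

end

theory Submission
  imports Defs
begin

lemma der_add: "derivation d \<Longrightarrow> d (x + y) = d x + d y"
  by (simp add: derivation_def)
lemma der_mult: "derivation d \<Longrightarrow> d (x * y) = x * d y + y * d x"
  by (simp add: derivation_def)

lemma der_zero: "derivation d \<Longrightarrow> d 0 = 0"
  using der_add[of d 0 0] by simp

lemma der_uminus: "derivation d \<Longrightarrow> d (- x) = - d x"
  using der_add[of d x "-x"] der_zero[of d] by simp

lemma der_one: "derivation d \<Longrightarrow> d 1 = 0"
  using der_mult[of d 1 1] by simp

lemma der_nat: "derivation d \<Longrightarrow> d (real n) = 0"
  by (induction n) (simp_all add: der_zero der_add der_one)

lemma der_int: assumes d: "derivation d" shows "d (real_of_int m) = 0"
proof (cases "m \<ge> 0")
  case True
  then have "real_of_int m = real (nat m)" by simp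
  then show ?thesis using der_nat[OF d, of "nat m"] by metis
next
  case False
  then have e: "real_of_int m = - real (nat (-m))" by simp
  have "d (- real (nat (-m))) = - d (real (nat (-m)))" by (rule der_uminus[OF d])
  then show ?thesis unfolding e using der_nat[OF d, of "nat (-m)"] by simp
qed

lemma der_rat: assumes d: "derivation d" and q: "q \<in> \<rat>" shows "d q = 0"
proof -
  obtain a b where b: "b > 0" and qe: "q = of_int a / of_int b" using Rats_cases'[OF q] by metis
  have "real_of_int b * q = real_of_int a" using b qe by simp
  then have "d (real_of_int b * q) = 0" using der_int[OF d, of a] by metis
  then have "real_of_int b * d q = 0" using der_mult[OF d, of "real_of_int b" q] der_int[OF d, of b] by simp
  then show ?thesis using b by simp
qed

definition Lg :: "(real \<Rightarrow> real) \<Rightarrow> real \<Rightarrow> real" where "Lg d x = d x / x"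

lemma Lg_mult: "derivation d \<Longrightarrow> x \<noteq> 0 \<Longrightarrow> y \<noteq> 0 \<Longrightarrow> Lg d (x * y) = Lg d x + Lg d y"
  by (simp add: Lg_def der_mult field_simps)

lemma Lg_pow: "derivation d \<Longrightarrow> x \<noteq> 0 \<Longrightarrow> Lg d (x ^ n) = real n * Lg d x"
proof (induction n)
  case 0 then show ?case by (simp add: Lg_def der_one)
next
  case (Suc n)
  then have "Lg d (x * x ^ n) = Lg d x + Lg d (x ^ n)" by (intro Lg_mult) auto
  then show ?case using Suc by (simp add: algebra_simps)
qed

lemma Lg_inv: "derivation d \<Longrightarrow> x \<noteq> 0 \<Longrightarrow> Lg d (inverse x) = - Lg d x"
  using Lg_mult[of d x "inverse x"] by (simp add: Lg_def der_one)

lemma Lg_powr_int: assumes d: "derivation d" and x: "x > 0"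
  shows "Lg d (x powr real_of_int m) = real_of_int m * Lg d x"
proof (cases "m \<ge> 0")
  case True
  then have "x powr real_of_int m = x ^ nat m" using x by (simp add: powr_realpow[symmetric])
  then show ?thesis using Lg_pow[OF d, of x "nat m"] x True by simp
next
  case False
  then have "x powr real_of_int m = inverse (x ^ nat (-m))" using x
    by (simp add: powr_realpow[symmetric] powr_minus[symmetric])
  then show ?thesis using Lg_pow[OF d, of x "nat (-m)"] Lg_inv[OF d, of "x ^ nat (-m)"] x False by simp
qed

lemma Lg_powr: assumes d: "derivation d" and x: "x > 0" and p: "p \<in> \<rat>"
  shows "Lg d (x powr p) = p * Lg d x"
proof -
  obtain a b where b: "b > 0" and pe: "p = of_int a / of_int b" using Rats_cases'[OF p] by metis
  define y where "y = x powr p"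
  have y0: "y > 0" using x by (simp add: y_def)
  have "y ^ nat b = y powr real (nat b)" using y0 by (simp add: powr_realpow)
  also have "\<dots> = x powr real_of_int a" using b x by (simp add: y_def powr_powr pe)
  finally have "Lg d (y ^ nat b) = real_of_int a * Lg d x" using Lg_powr_int[OF d x] by simp
  then have "real_of_int b * Lg d y = real_of_int a * Lg d x" using Lg_pow[OF d, of y "nat b"] y0 b by simp
  then show ?thesis using b by (simp add: y_def pe field_simps)
qed

lemma F_Lg: "F d \<alpha> x = x powr \<alpha> * exp (Lg d x)"
  by (simp add: F_def Lg_def)

theorem theorem3:
  fixes d :: "real \<Rightarrow> real" and \<alpha> :: real
  assumes "derivation d" and "\<alpha> > 0"
  shows "multiplicative_pos (F d \<alpha>)
    \<and> (\<forall>p\<in>\<rat>. p > 0 \<longrightarrow> (\<forall>x>0. \<forall>y>0.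
          F d \<alpha> (H p x y) \<le> H (p / \<alpha>) (F d \<alpha> x) (F d \<alpha> y)))
    \<and> (d \<noteq> (\<lambda>_. 0) \<longrightarrow> \<not> continuous_on {0<..} (F d \<alpha>))"
proof (intro conjI)
  note d = assms(1)
  show "multiplicative_pos (F d \<alpha>)"
    unfolding multiplicative_pos_def
  proof (intro conjI allI impI)
    fix x :: real assume "x > 0" then show "F d \<alpha> x > 0" by (simp add: F_def)
  next
    fix x y :: real assume "x > 0" "y > 0"
    then show "F d \<alpha> (x * y) = F d \<alpha> x * F d \<alpha> y"
      by (simp add: F_Lg Lg_mult[OF d] powr_mult exp_add)
  qed
next
  note d = assms(1)
  show "\<forall>p\<in>\<rat>. p > 0 \<longrightarrow> (\<forall>x>0. \<forall>y>0.
          F d \<alpha> (H p x y) \<le> H (p / \<alpha>) (F d \<alpha> x) (F d \<alpha> y))"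
  proof (intro ballI impI allI)
    fix p x y :: real assume p: "p \<in> \<rat>" "p > 0" and x: "x > 0" and y: "y > 0"
    define a where "a = Lg d x"
    define b where "b = Lg d y"
    define xp where "xp = x powr p"
    define yp where "yp = y powr p"
    define S where "S = xp + yp"
    have xp0: "xp > 0" and yp0: "yp > 0" using x y by (auto simp: xp_def yp_def)
    have S0: "S > 0" using xp0 yp0 by (simp add: S_def)
    have Hp: "H p x y = (S/2) powr (1/p)" using p by (simp add: H_def S_def xp_def yp_def)
    have ip: "1/p \<in> \<rat>" using p by simp
    have "d (S/2) = d S / 2"
      using der_mult[OF d, of S "1/2"] der_rat[OF d, of "1/2"] by simp
    then have LS2: "Lg d (S/2) = Lg d S" using S0 by (simp add: Lg_def)
    have "d S = d xp + d yp" by (simp add: S_def der_add[OF d])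
    also have "d xp = xp * (p * a)" using Lg_powr[OF d x p(1)] xp0 by (simp add: Lg_def xp_def a_def field_simps)
    also have "d yp = yp * (p * b)" using Lg_powr[OF d y p(1)] yp0 by (simp add: Lg_def yp_def b_def field_simps)
    finally have dS: "d S = p * (xp * a + yp * b)" by (simp add: algebra_simps)
    define E where "E = (xp * a + yp * b) / S"
    have LH: "Lg d (H p x y) = E"
      unfolding Hp using Lg_powr[OF d _ ip, of "S/2"] S0 p(2) LS2 dS
      by (simp add: Lg_def E_def)
    define A where "A = p * a / \<alpha>"
    define B where "B = p * b / \<alpha>"
    have Fxp: "F d \<alpha> x powr (p/\<alpha>) = xp * exp A"
      using x assms(2) by (simp add: F_Lg powr_mult exp_powr_real powr_powr xp_def A_def a_def)
    have Fyp: "F d \<alpha> y powr (p/\<alpha>) = yp * exp B"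
      using y assms(2) by (simp add: F_Lg powr_mult exp_powr_real powr_powr yp_def B_def b_def)
    have RHS: "H (p / \<alpha>) (F d \<alpha> x) (F d \<alpha> y) = ((xp * exp A + yp * exp B)/2) powr (\<alpha>/p)"
      using p(2) assms(2) by (simp add: H_def Fxp Fyp)
    have LHS: "F d \<alpha> (H p x y) = ((S/2) * exp (E * p / \<alpha>)) powr (\<alpha>/p)"
    proof -
      have "F d \<alpha> (H p x y) = (H p x y) powr \<alpha> * exp E" by (simp add: F_Lg LH)
      also have "\<dots> = (S/2) powr (\<alpha>/p) * exp (E * p / \<alpha>) powr (\<alpha>/p)"
        using S0 p(2) assms(2) by (simp add: Hp powr_powr exp_powr_real)
      also have "\<dots> = ((S/2) * exp (E * p / \<alpha>)) powr (\<alpha>/p)"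
        using S0 by (subst powr_mult) auto
      finally show ?thesis .
    qed
    define w where "w = yp / S"
    have w01: "0 \<le> w" "w \<le> 1" using xp0 yp0 by (auto simp: w_def S_def)
    have omw: "1 - w = xp/S" using S0 by (simp add: w_def S_def field_simps)
    have Ew: "E * p / \<alpha> = (1 - w) * A + w * B"
    proof -
      have nz: "S \<noteq> 0" "\<alpha> \<noteq> 0" using S0 assms(2) by auto
      then have "(1 - w) * A + w * B = xp/S * (p * a / \<alpha>) + (yp/S) * (p * b / \<alpha>)"
        by (subst omw) (simp add: w_def A_def B_def)
      also have "\<dots> = (xp * a + yp * b) / S * p / \<alpha>" using nz by (simp add: field_simps)
      finally show ?thesis by (simp add: E_def)
    qed
    have conv: "exp ((1 - w) * A + w * B) \<le> (1 - w) * exp A + w * exp B"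
      using convex_onD[OF exp_convex, of w A B] w01 by simp
    have key: "(S/2) * exp (E * p / \<alpha>) \<le> (xp * exp A + yp * exp B)/2"
    proof -
      have "(S/2) * exp (E * p / \<alpha>) \<le> (S/2) * ((1 - w) * exp A + w * exp B)"
        using conv S0 Ew by simp
      also have "\<dots> = (S/2) * (xp/S * exp A + yp/S * exp B)"
        by (subst omw) (simp add: w_def)
      also have "\<dots> = (xp * exp A + yp * exp B)/2"
        using S0 by (simp add: field_simps)
      finally show ?thesis .
    qed
    show "F d \<alpha> (H p x y) \<le> H (p / \<alpha>) (F d \<alpha> x) (F d \<alpha> y)"
      unfolding LHS RHS
      by (rule powr_mono2) (use key S0 p(2) assms(2) in auto)
  qed
next
  note d = assms(1)
  show "d \<noteq> (\<lambda>_. 0) \<longrightarrow> \<not> continuous_on {0<..} (F d \<alpha>)"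
  proof (intro impI notI)
    assume nz: "d \<noteq> (\<lambda>_. 0)" and c: "continuous_on {0<..} (F d \<alpha>)"
    define G where "G z = F d \<alpha> z - z powr \<alpha>" for z
    have cG: "continuous_on {0<..} G"
      unfolding G_def by (intro continuous_intros c) auto
    have G0: "G x = 0" if "x > 0" for x
    proof (rule ccontr)
      assume ne: "G x \<noteq> 0"
      have "isCont G x" using cG that continuous_on_eq_continuous_at[of "{0<..}" G] by auto
      then have "\<forall>e>0. \<exists>d>0. \<forall>z. dist z x < d \<longrightarrow> dist (G z) (G x) < e"
        unfolding continuous_at_eps_delta .
      moreover have "\<bar>G x\<bar> > 0" using ne by simp
      ultimately obtain e where e: "e > 0" "\<And>z. dist z x < e \<Longrightarrow> dist (G z) (G x) < \<bar>G x\<bar>"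
        by blast
      obtain q where q: "q \<in> \<rat>" "x < q" "q < x + e" using Rats_dense_in_real[of x "x+e"] e(1) by auto
      have "G q = 0" using q der_rat[OF d q(1)] that by (simp add: G_def F_def)
      moreover have "dist q x < e" using q by (simp add: dist_real_def)
      ultimately show False using e(2)[of q] by (simp add: dist_real_def)
    qed
    have dpos: "d x = 0" if "x > 0" for x
      using G0[OF that] that by (simp add: G_def F_def)
    have "d x = 0" for x
    proof (cases "x > 0")
      case True then show ?thesis using dpos by simp
    next
      case False
      show ?thesis
      proof (cases "x = 0")
        case True then show ?thesis using der_zero[OF d] by simp
      next
        case False
        then have "-x > 0" using \<open>\<not> x > 0\<close> by simp
        then show ?thesis using dpos der_uminus[OF d, of x] by simp
      qed
    qed
    then show False using nz by auto
  qed
qed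

end
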